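(* Let $n>2$, $\mathbf{A}=\{a_1,\dots,a_n\}$, and let $\mathbf{S}_2^n=\{XY : X,Y\in\mathbf{A}^*\setminus\{\emptyset\},\ \overline{\nu}(X)=\overline{\nu}(Y)\}$. Then $$L_{min}(\mathbf{S}_2^n)=4n-7.$$
   Context: A word over $\mathbf{A}$ is a finite sequence of letters; $\mathbf{A}^*$ is the set of all words. A subword is a block of consecutive letters. For a word $X$, the content vector is $\overline{\nu}(X)=(\nu_1(X),\dots,\nu_n(X))$, where $\nu_i(X)$ is the number of occurrences of $a_i$ in $X$. For $\mathbf{S}\subseteq\mathbf{A}^*$, a word is free from $\mathbf{S}$ if none of its subwords belongs to $\mathbf{S}$. A word $X$ free from $\mathbf{S}$ is crucial with respect to $\mathbf{S}$ if for every letter $a\in\mathbf{A}$ the word $Xa$ contains a subword belonging to $\mathbf{S}$. $L_{min}(\mathbf{S})$ is the smallest length of a crucial word with respect to $\mathbf{S}$. *)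

theory Defs
  imports Main "HOL-Library.Sublist"
begin

text \<open>The alphabet A = {a_1,...,a_n} is represented by the letters 0,...,n-1 (type nat);
  words are lists of letters.\<close>

definition alphabet :: "nat \<Rightarrow> nat set" where
  "alphabet n = {0..<n}"

definition words :: "nat \<Rightarrow> nat list set" where
  "words n = {w. set w \<subseteq> alphabet n}"

definition content :: "nat \<Rightarrow> nat list \<Rightarrow> nat list" where
  "content n X = map (\<lambda>i. count_list X i) [0..<n]"

definition S2 :: "nat \<Rightarrow> nat list set" where
  "S2 n = {X @ Y | X Y. X \<in> words n \<and> Y \<in> words n \<and> X \<noteq> [] \<and> Y \<noteq> []
                        \<and> content n X = content n Y}"

text \<open>Subword = block of consecutive letters (contiguous sublist).\<close>
definition free_from :: "nat list set \<Rightarrow> nat list \<Rightarrow> bool" where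
  "free_from S w \<longleftrightarrow> (\<forall>u. sublist u w \<longrightarrow> u \<notin> S)"

definition crucial :: "nat \<Rightarrow> nat list set \<Rightarrow> nat list \<Rightarrow> bool" where
  "crucial n S w \<longleftrightarrow> w \<in> words n \<and> free_from S w
     \<and> (\<forall>a\<in>alphabet n. \<exists>u. sublist u (w @ [a]) \<and> u \<in> S)"

definition L_min :: "nat \<Rightarrow> nat list set \<Rightarrow> nat" where
  "L_min n S = (LEAST k. \<exists>w. crucial n S w \<and> length w = k)"

end

theory Submission
  imports Defs "HOL-Library.Multiset"
begin

definition sc :: "nat list \<Rightarrow> nat \<Rightarrow> nat \<Rightarrow> nat" where
  "sc w k c = count_list (drop (length w - k) w) c"

lemma count_list_append_cnt: "count_list (xs @ ys) c = count_list xs c + count_list ys c"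
  by (induction xs) auto

lemma sc_mono:
  assumes "k \<le> k'"
  shows "sc w k c \<le> sc w k' c"
proof -
  define i where "i = length w - k'"
  define j where "j = length w - k"
  have ij: "i \<le> j" using assms by (simp add: i_def j_def)
  have "drop i w = take (j - i) (drop i w) @ drop (j - i) (drop i w)" by (rule append_take_drop_id[symmetric])
  also have "drop (j - i) (drop i w) = drop j w" using ij by simp
  finally have "count_list (drop i w) c = count_list (take (j - i) (drop i w)) c + count_list (drop j w) c"
    by (metis count_list_append_cnt)
  thus ?thesis unfolding sc_def i_def[symmetric] j_def[symmetric] by simp
qed

lemma content_mset:
  assumes "X \<in> words n" "Y \<in> words n" "content n X = content n Y"
  shows "mset X = mset Y"
proof (rule multiset_eqI)
  fix c
  show "count (mset X) c = count (mset Y) c"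
  proof (cases "c < n")
    case True
    have "content n X ! c = content n Y ! c" using assms(3) by simp
    thus ?thesis using True by (simp add: content_def count_mset)
  next
    case False
    hence "c \<notin> set X" "c \<notin> set Y" using assms(1,2) by (auto simp: words_def alphabet_def)
    thus ?thesis by (simp add: count_mset count_list_0_iff)
  qed
qed

lemma wit:
  assumes "crucial n (S2 n) w" "a < n"
  shows "\<exists>h\<ge>1. 2*h-1 \<le> length w \<and>
          (\<forall>c. sc w (2*h-1) c = 2 * sc w (h-1) c + (if c = a then 1 else 0))"
proof -
  have "a \<in> alphabet n" using assms(2) by (simp add: alphabet_def)
  then obtain u where u: "sublist u (w@[a])" "u \<in> S2 n"
    using assms(1) unfolding crucial_def by blast
  have "\<not> sublist u w" using assms(1) u(2) by (auto simp: crucial_def free_from_def)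
  hence suf: "suffix u (w@[a])" using u(1) sublist_snoc[of u w a] by simp
  from u(2) obtain Y Z where YZ: "u = Y@Z" "Y \<in> words n" "Z \<in> words n" "Y\<noteq>[]" "Z\<noteq>[]"
     "content n Y = content n Z" by (auto simp: S2_def)
  have ms: "mset Y = mset Z" using content_mset YZ by blast
  obtain Z' b where Z': "Z = Z'@[b]" using YZ(5) by (metis rev_exhaust)
  have "suffix (Y@Z'@[b]) (w@[a])" using suf YZ(1) Z' by simp
  hence ba: "b = a" and "suffix (Y@Z') w" by (auto simp: suffix_def)
  then obtain q where w: "w = q @ Y @ Z'" by (auto simp: suffix_def)
  define h where "h = length Y"
  have lZ: "length Z = h" using ms h_def by (metis size_mset)
  have lZ': "length Z' = h - 1" using lZ Z' by simp
  have h1: "h \<ge> 1" using YZ(4) h_def by (cases Y) auto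
  have d1: "drop (length w - (h-1)) w = Z'" using w lZ' h1 h_def by simp
  have d2: "drop (length w - (2*h-1)) w = Y @ Z'" using w lZ' h1 h_def by simp
  have "\<forall>c. sc w (2*h-1) c = 2 * sc w (h-1) c + (if c = a then 1 else 0)"
  proof
    fix c
    have "count_list Y c = count_list Z c" using ms by (metis count_mset)
    also have "\<dots> = count_list Z' c + (if c = a then 1 else 0)" using Z' ba
      by (simp add: count_list_append_cnt)
    finally show "sc w (2*h-1) c = 2 * sc w (h-1) c + (if c = a then 1 else 0)"
      unfolding sc_def d1 d2 by (simp add: count_list_append_cnt)
  qed
  moreover have "2*h-1 \<le> length w" using w lZ' h_def h1 by simp
  ultimately show ?thesis using h1 by blast
qed


lemma lower:
  assumes cr: "crucial n (S2 n) w" and n3: "n \<ge> 3"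
  shows "4*n - 7 \<le> length w"
proof -
  have "\<forall>a\<in>{0..<n}. \<exists>h. h \<ge> 1 \<and> 2*h-1 \<le> length w \<and>
          (\<forall>c. sc w (2*h-1) c = 2 * sc w (h-1) c + (if c = a then 1 else 0))"
    using wit[OF cr] by auto
  then obtain hf where hf0: "\<forall>a\<in>{0..<n}. hf a \<ge> 1 \<and> 2*hf a-1 \<le> length w \<and>
          (\<forall>c. sc w (2*hf a-1) c = 2 * sc w (hf a-1) c + (if c = a then 1 else 0))"
    by metis
  have h1: "\<And>a. a < n \<Longrightarrow> hf a \<ge> 1" using hf0 by auto
  have hL: "\<And>a. a < n \<Longrightarrow> 2*hf a-1 \<le> length w" using hf0 by auto
  have heq: "\<And>a c. a < n \<Longrightarrow> sc w (2*hf a-1) c = 2 * sc w (hf a-1) c + (if c = a then 1 else 0)"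
    using hf0 by auto
  have inj: "\<And>a b. a < n \<Longrightarrow> b < n \<Longrightarrow> hf a = hf b \<Longrightarrow> a = b"
  proof -
    fix a b assume ab: "a < n" "b < n" "hf a = hf b"
    have "sc w (2*hf a-1) a = 2 * sc w (hf a-1) a + 1" using heq[OF ab(1), of a] by simp
    moreover have "sc w (2*hf a-1) a = 2 * sc w (hf a-1) a + (if a = b then 1 else 0)"
      using heq[OF ab(2), of a] ab(3) by simp
    ultimately show "a = b" by (cases "a = b") auto
  qed
  define A where "A = {0..<n::nat}"
  have finA: "finite A" and neA: "A \<noteq> {}" using n3 by (auto simp: A_def)
  define H where "H = Max (hf ` A)"
  have "H \<in> hf ` A" using finA neA by (simp add: H_def)
  then obtain z where z: "z < n" "hf z = H" by (auto simp: A_def)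
  have hle: "\<And>a. a < n \<Longrightarrow> hf a \<le> H" using finA by (auto simp: H_def A_def)
  have H1: "H \<ge> 1" using h1 z by auto
  define W where "W c = sc w (2*H-1) c" for c
  define V where "V c = sc w (H-1) c" for c
  have WV: "\<And>c. W c = 2 * V c + (if c = z then 1 else 0)"
    unfolding W_def V_def using heq[OF z(1)] z(2) by simp
  have odd1: "\<And>c. c < n \<Longrightarrow> sc w (2*hf c-1) c = 2 * sc w (hf c-1) c + 1"
    using heq by simp
  have Wge: "\<And>c. c < n \<Longrightarrow> sc w (2*hf c-1) c \<le> W c"
    unfolding W_def using hle by (metis sc_mono diff_le_mono mult_le_mono2)
  have W2: "\<And>c. c < n \<Longrightarrow> c \<noteq> z \<Longrightarrow> W c \<ge> 2"
  proof -
    fix c assume c: "c < n" "c \<noteq> z"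
    have "W c \<ge> 1" using Wge[OF c(1)] odd1[OF c(1)] by simp
    thus "W c \<ge> 2" using WV[of c] c(2) by simp
  qed
  define T where "T = {c \<in> A. c \<noteq> z \<and> W c = 2}"
  have TV: "\<And>c. c \<in> T \<Longrightarrow> V c = 1" using WV by (auto simp: T_def)
  have Tsmall: "\<And>c. c \<in> T \<Longrightarrow> sc w (2*hf c-1) c = 1 \<and> sc w (hf c-1) c = 0"
  proof -
    fix c assume c: "c \<in> T"
    hence cn: "c < n" and Wc: "W c = 2" by (auto simp: T_def A_def)
    have "2 * sc w (hf c-1) c + 1 \<le> 2" using Wge[OF cn] odd1[OF cn] Wc by simp
    thus "sc w (2*hf c-1) c = 1 \<and> sc w (hf c-1) c = 0" using odd1[OF cn] by simp
  qed
  have key: "\<And>c d e. c \<in> T \<Longrightarrow> d \<in> T \<Longrightarrow> e \<in> T \<Longrightarrow> hf c < hf d \<Longrightarrow> hf d < hf e \<Longrightarrow> False"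
  proof -
    fix c d e assume cT: "c \<in> T" and dT: "d \<in> T" and eT: "e \<in> T"
      and cd: "hf c < hf d" and de: "hf d < hf e"
    have cn: "c < n" and dn: "d < n" and en: "e < n" using cT dT eT by (auto simp: T_def A_def)
    have "c \<noteq> d" using cd by auto
    have "d \<noteq> e" using de by auto
    have e1: "sc w (2*hf d-1) c = 2 * sc w (hf d-1) c" using heq[OF dn, of c] \<open>c \<noteq> d\<close> by simp
    have e2: "sc w (2*hf c-1) c \<le> sc w (2*hf d-1) c" using cd by (intro sc_mono) simp
    have e3: "sc w (2*hf d-1) c \<le> W c" unfolding W_def using hle[OF dn] by (intro sc_mono) simp
    have "sc w (2*hf d-1) c = 2" using e1 e2 e3 Tsmall[OF cT] cT by (auto simp: T_def)
    have HH: "H - 1 \<le> 2*hf d-1"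
    proof (rule ccontr)
      assume "\<not> H - 1 \<le> 2*hf d-1"
      hence "sc w (2*hf d-1) c \<le> V c" unfolding V_def by (intro sc_mono) simp
      thus False using \<open>sc w (2*hf d-1) c = 2\<close> TV[OF cT] by simp
    qed
    have f1: "sc w (2*hf d-1) e = 2 * sc w (hf d-1) e" using heq[OF dn, of e] \<open>d \<noteq> e\<close> by simp
    have f2: "sc w (2*hf d-1) e \<le> sc w (2*hf e-1) e" using de by (intro sc_mono) simp
    have f3: "V e \<le> sc w (2*hf d-1) e" unfolding V_def using HH by (intro sc_mono) simp
    show False using f1 f2 f3 Tsmall[OF eT] TV[OF eT] by simp
  qed
  have cardT: "card T \<le> 2"
  proof (rule ccontr)
    assume "\<not> card T \<le> 2"
    hence "3 \<le> card T" by simp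
    then obtain S where S: "S \<subseteq> T" "card S = 3" using obtain_subset_with_card_n by metis
    then obtain x y v where xyv: "S = {x,y,v}" "x \<noteq> y" "y \<noteq> v" "x \<noteq> v" by (auto simp: card_3_iff)
    have xT: "x \<in> T" and yT: "y \<in> T" and vT: "v \<in> T" using S xyv by auto
    have Tn: "\<And>c. c \<in> T \<Longrightarrow> c < n" by (auto simp: T_def A_def)
    have d1: "hf x \<noteq> hf y" using inj Tn xT yT xyv by blast
    have d2: "hf y \<noteq> hf v" using inj Tn vT yT xyv by blast
    have d3: "hf x \<noteq> hf v" using inj Tn xT vT xyv by blast
    show False
    proof (cases "hf x < hf y")
      case True
      then show ?thesis
      proof (cases "hf y < hf v")
        case True
        then show ?thesis using key[OF xT yT vT] \<open>hf x < hf y\<close> by blast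
      next
        case False
        hence "hf v < hf y" using d2 by simp
        then show ?thesis using key[OF xT vT yT] key[OF vT xT yT] \<open>hf x < hf y\<close> d3 by (cases "hf x < hf v") auto
      qed
    next
      case False
      hence yx: "hf y < hf x" using d1 by simp
      then show ?thesis
      proof (cases "hf x < hf v")
        case True
        then show ?thesis using key[OF yT xT vT] yx by blast
      next
        case False
        hence "hf v < hf x" using d3 by simp
        then show ?thesis using key[OF yT vT xT] key[OF vT yT xT] yx d2 by (cases "hf y < hf v") auto
      qed
    qed
  qed
  have wl: "2*H-1 \<le> length w" using hL[OF z(1)] z(2) by simp
  have setw: "set (drop (length w - (2*H-1)) w) \<subseteq> A"
    using cr by (auto simp: crucial_def words_def alphabet_def A_def dest: in_set_dropD)
  have sumW: "sum W A = 2*H-1"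
    unfolding W_def sc_def using sum_count_set[OF setw finA] wl by simp
  have zA: "z \<in> A" using z by (simp add: A_def)
  have TA: "T \<subseteq> A - {z}" by (auto simp: T_def)
  have s1: "sum W A = W z + sum W (A - {z})" using finA zA by (simp add: sum.remove)
  have s2: "sum W (A - {z}) = sum W ((A - {z}) - T) + sum W T"
    using finA TA by (simp add: sum.subset_diff)
  have s3: "sum W T = 2 * card T" by (simp add: T_def)
  have s4: "4 * card ((A - {z}) - T) \<le> sum W ((A - {z}) - T)"
  proof -
    have "\<And>c. c \<in> (A - {z}) - T \<Longrightarrow> 4 \<le> W c"
    proof -
      fix c assume c: "c \<in> (A - {z}) - T"
      hence cn: "c < n" and cz: "c \<noteq> z" and "W c \<noteq> 2" by (auto simp: A_def T_def)
      have "W c = 2 * V c" using WV[of c] cz by simp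
      thus "4 \<le> W c" using W2[OF cn cz] \<open>W c \<noteq> 2\<close> by presburger
    qed
    thus ?thesis using sum_bounded_below[of "(A - {z}) - T" 4 W] by (simp add: mult.commute)
  qed
  have c1: "card ((A - {z}) - T) = card (A - {z}) - card T"
    using TA finA by (simp add: card_Diff_subset finite_subset)
  have c2: "card (A - {z}) = n - 1" using zA by (simp add: A_def)
  have cTn: "card T \<le> n - 1" using TA finA c2 by (metis card_mono finite_Diff)
  have "W z \<ge> 1" using WV[of z] by simp
  have "4 * (n - 1 - card T) + 2 * card T + 1 \<le> 2*H-1"
    using s1 s2 s3 s4 c1 c2 sumW \<open>W z \<ge> 1\<close> by linarith
  thus ?thesis using wl cardT cTn n3 by linarith
qed


section \<open>Upper bound: the construction\<close>

definition pairs :: "nat \<Rightarrow> nat \<Rightarrow> nat list" where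
  "pairs i j = concat (map (\<lambda>k. [Suc k, k]) [i..<j])"

definition Xw :: "nat \<Rightarrow> nat list" where
  "Xw m = [1, m] @ pairs 1 (m-1) @ [0] @ [1..<m] @ rev [0..<m-1]"

lemma pairs_Suc: "i \<le> j \<Longrightarrow> pairs i (Suc j) = pairs i j @ [Suc j, j]"
  by (simp add: pairs_def)

lemma length_pairs: "length (pairs i j) = 2 * (j - i)"
  by (induction j) (auto simp: pairs_def)

lemma nth_pairs: "t < 2 * (j - i) \<Longrightarrow> pairs i j ! t = (if even t then i + t div 2 + 1 else i + t div 2)"
proof (induction j arbitrary: t)
  case 0
  then show ?case by simp
next
  case (Suc j)
  hence ij: "i \<le> j" by simp
  show ?case
  proof (cases "t < 2 * (j - i)")
    case True
    then show ?thesis using Suc pairs_Suc[OF ij] by (simp add: nth_append length_pairs)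
  next
    case False
    hence "t = 2*(j-i) \<or> t = 2*(j-i) + 1" using Suc.prems ij by auto
    then show ?thesis using pairs_Suc[OF ij] ij by (auto simp: nth_append length_pairs)
  qed
qed

definition g :: "nat \<Rightarrow> nat \<Rightarrow> nat" where
  "g m k = (if k = 0 then 1 else if k = 1 then m else if k \<le> 2*m-3 then
      (if even k then k div 2 + 1 else k div 2) else if k = 2*m-2 then 0
      else if k \<le> 3*m-3 then k - (2*m-2) else 4*m-4-k)"

lemma g_R2: "2 \<le> k \<Longrightarrow> k \<le> 2*m-3 \<Longrightarrow> g m k = (if even k then k div 2 + 1 else k div 2)"
proof -
  assume a: "2 \<le> k" "k \<le> 2*m-3"
  hence "k \<noteq> 0" "k \<noteq> 1" by auto
  thus ?thesis using a(2) unfolding g_def by simp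
qed

lemma g_mid: "m \<ge> 2 \<Longrightarrow> g m (2*m-2) = 0"
proof -
  assume a: "m \<ge> 2"
  hence "2*m-2 \<noteq> 0" "2*m-2 \<noteq> 1" "\<not> 2*m-2 \<le> 2*m-3" by auto
  thus ?thesis unfolding g_def by simp
qed

lemma g_R4: "2*m-2 < k \<Longrightarrow> k \<le> 3*m-3 \<Longrightarrow> m \<ge> 2 \<Longrightarrow> g m k = k-(2*m-2)"
proof -
  assume a: "2*m-2 < k" "k \<le> 3*m-3" "m \<ge> 2"
  hence "k \<noteq> 0" "k \<noteq> 1" "\<not> k \<le> 2*m-3" "k \<noteq> 2*m-2" by auto
  thus ?thesis using a(2) unfolding g_def by simp
qed

lemma g_R5: "3*m-3 < k \<Longrightarrow> m \<ge> 2 \<Longrightarrow> g m k = 4*m-4-k"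
proof -
  assume a: "3*m-3 < k" "m \<ge> 2"
  hence "k \<noteq> 0" "k \<noteq> 1" "\<not> k \<le> 2*m-3" "k \<noteq> 2*m-2" "\<not> k \<le> 3*m-3" by auto
  thus ?thesis unfolding g_def by simp
qed

lemma length_Xw: "m \<ge> 2 \<Longrightarrow> length (Xw m) = 4*m-3"
  by (simp add: Xw_def length_pairs)

lemma nth_Xw:
  assumes m: "m \<ge> 2" and k: "k < 4*m-3"
  shows "Xw m ! k = g m k"
proof -
  consider "k = 0" | "k = 1" | "2 \<le> k \<and> k \<le> 2*m-3" | "k = 2*m-2" | "2*m-1 \<le> k \<and> k \<le> 3*m-3"
     | "3*m-2 \<le> k" by linarith
  then show ?thesis
  proof cases
    case 1 then show ?thesis by (simp add: Xw_def g_def)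
  next
    case 2 then show ?thesis using m by (simp add: Xw_def g_def)
  next
    case 3
    obtain t where t: "k = Suc (Suc t)" using 3 by (metis add_2_eq_Suc le_Suc_ex)
    have tl: "t < length (pairs 1 (m-1))" using 3 t m by (simp add: length_pairs)
    have "Xw m ! k = pairs 1 (m-1) ! t" using tl unfolding Xw_def t by (simp add: nth_append)
    moreover have "pairs 1 (m-1) ! t = g m k"
    proof (cases "even t")
      case True
      then obtain b where "t = 2*b" by blast
      then show ?thesis using tl t m 3 g_R2[of k m] by (simp add: nth_pairs length_pairs)
    next
      case False
      then obtain b where "t = 2*b+1" using oddE by blast
      then show ?thesis using tl t m 3 g_R2[of k m] by (simp add: nth_pairs length_pairs)
    qed
    ultimately show ?thesis by simp
  next
    case 4
    have "Xw m = ([1, m] @ pairs 1 (m-1)) @ [0] @ [1..<m] @ rev [0..<m-1]" by (simp add: Xw_def)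
    moreover have "length ([1, m] @ pairs 1 (m-1)) = k" using 4 m by (simp add: length_pairs)
    ultimately have "Xw m ! k = ([0] @ [1..<m] @ rev [0..<m-1]) ! 0" by (metis nth_append_length_plus add_0_right)
    hence "Xw m ! k = 0" by simp
    then show ?thesis using 4 g_mid[OF m] by simp
  next
    case 5
    obtain t where t: "k = (2*m-1) + t" using 5 by (metis le_Suc_ex)
    have tb: "t < m - 1" using t 5 m by linarith
    have "Xw m = ([1, m] @ pairs 1 (m-1) @ [0]) @ [1..<m] @ rev [0..<m-1]" by (simp add: Xw_def)
    moreover have "length ([1, m] @ pairs 1 (m-1) @ [0]) = 2*m-1" using m by (simp add: length_pairs)
    ultimately have "Xw m ! k = ([1..<m] @ rev [0..<m-1]) ! t" unfolding t by (metis nth_append_length_plus)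
    also have "\<dots> = [1..<m] ! t" using tb by (simp add: nth_append)
    also have "\<dots> = 1 + t" using tb by simp
    moreover have "2*m-2 < k" "k \<le> 3*m-3" using 5 m by linarith+
    moreover have "k - (2*m-2) = 1 + t" using t m by linarith
    ultimately show ?thesis using g_R4[of m k] m by simp
  next
    case 6
    obtain t where t: "k = (3*m-2) + t" using 6 by (metis le_Suc_ex)
    have tb: "t < m - 1" using t k m by linarith
    have "Xw m = ([1, m] @ pairs 1 (m-1) @ [0] @ [1..<m]) @ rev [0..<m-1]" by (simp add: Xw_def)
    moreover have "length ([1, m] @ pairs 1 (m-1) @ [0] @ [1..<m]) = 3*m-2" using m by (simp add: length_pairs)
    ultimately have "Xw m ! k = rev [0..<m-1] ! t" unfolding t by (metis nth_append_length_plus)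
    also have "\<dots> = m - 2 - t" using tb by (simp add: rev_nth)
    moreover have "3*m-3 < k" using 6 m by linarith
    moreover have "4*m-4-k = m-2-t" using t k m by linarith
    ultimately show ?thesis using g_R5[of m k] m by simp
  qed
qed




definition Pset :: "nat list \<Rightarrow> nat \<Rightarrow> nat set" where
  "Pset w k = {c. odd (count_list (take k w) c)}"

definition P :: "nat \<Rightarrow> nat \<Rightarrow> nat set" where
  "P m k = (if k = 0 then {} else if k = 1 then {1} else if k \<le> 2*m-2 then
      (if even k then {k div 2, m} else {k div 2, k div 2 + 1, m})
      else if k \<le> 3*m-3 then {0..k-(2*m-1)} \<union> {m-1, m} else {0..<4*m-3-k} \<union> {m})"


lemma P_R2: "2 \<le> k \<Longrightarrow> k \<le> 2*m-2 \<Longrightarrow> P m k = (if even k then {k div 2, m} else {k div 2, k div 2 + 1, m})"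
proof -
  assume a: "2 \<le> k" "k \<le> 2*m-2"
  hence "k \<noteq> 0" "k \<noteq> 1" by auto
  thus ?thesis using a(2) unfolding P_def by simp
qed

lemma P_R4: "2*m-2 < k \<Longrightarrow> k \<le> 3*m-3 \<Longrightarrow> m \<ge> 2 \<Longrightarrow> P m k = {0..k-(2*m-1)} \<union> {m-1, m}"
proof -
  assume a: "2*m-2 < k" "k \<le> 3*m-3" "m \<ge> 2"
  hence "k \<noteq> 0" "k \<noteq> 1" "\<not> k \<le> 2*m-2" by auto
  thus ?thesis using a(2) unfolding P_def by simp
qed

lemma P_R5: "3*m-3 < k \<Longrightarrow> m \<ge> 2 \<Longrightarrow> P m k = {0..<4*m-3-k} \<union> {m}"
proof -
  assume a: "3*m-3 < k" "m \<ge> 2"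
  hence "k \<noteq> 0" "k \<noteq> 1" "\<not> k \<le> 2*m-2" "\<not> k \<le> 3*m-3" by auto
  thus ?thesis unfolding P_def by simp
qed

lemma Pstep:
  assumes m: "m \<ge> 2" and k: "k < 4*m-3"
  shows "c \<in> P m (Suc k) \<longleftrightarrow> ((c \<in> P m k) \<noteq> (c = g m k))"
proof -
  have "k = 0 \<or> k = 1 \<or> (2 \<le> k \<and> k \<le> 2*m-3) \<or> k = 2*m-2 \<or> (2*m-1 \<le> k \<and> k \<le> 3*m-4)
    \<or> k = 3*m-3 \<or> 3*m-2 \<le> k" using m by linarith
  then consider "k = 0" | "k = 1" | "2 \<le> k \<and> k \<le> 2*m-3 \<and> even k" | "2 \<le> k \<and> k \<le> 2*m-3 \<and> odd k"
    | "k = 2*m-2" | "2*m-1 \<le> k \<and> k \<le> 3*m-4" | "k = 3*m-3" | "3*m-2 \<le> k" by blast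
  then show ?thesis
  proof cases
    case 1
    have "P m 0 = {}" "P m 1 = {1}" "g m 0 = 1" by (simp_all add: P_def g_def)
    then show ?thesis using 1 by auto
  next
    case 2
    have r: "2 \<le> Suc k" "Suc k \<le> 2*m-2" using 2 m by linarith+
    have A: "P m k = {1}" using 2 by (simp add: P_def)
    have B: "P m (Suc k) = {1, m}" using P_R2[OF r] 2 by simp
    have G: "g m k = m" using 2 by (simp add: g_def)
    show ?thesis unfolding A B G using m by auto
  next
    case 3
    then obtain b where b: "k = 2*b" by blast
    have r: "2 \<le> k" "k \<le> 2*m-2" "2 \<le> Suc k" "Suc k \<le> 2*m-2" "k \<le> 2*m-3" using 3 by linarith+
    have A: "P m k = {b, m}" using P_R2[OF r(1,2)] b by simp
    have B: "P m (Suc k) = {b, b+1, m}" using P_R2[OF r(3,4)] b by simp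
    have G: "g m k = b + 1" using g_R2[OF r(1,5)] b by simp
    have "b + 1 < m" "b \<noteq> m" using 3 b m by linarith+
    then show ?thesis unfolding A B G by auto
  next
    case 4
    then obtain b where b: "k = 2*b+1" using oddE by blast
    have r: "2 \<le> k" "k \<le> 2*m-2" "2 \<le> Suc k" "Suc k \<le> 2*m-2" "k \<le> 2*m-3" using 4 by linarith+
    have A: "P m k = {b, b+1, m}" using P_R2[OF r(1,2)] b by simp
    have B: "P m (Suc k) = {b+1, m}" using P_R2[OF r(3,4)] b by simp
    have G: "g m k = b" using g_R2[OF r(1,5)] b by simp
    have "b + 1 < m" using 4 b m by linarith
    then show ?thesis unfolding A B G by auto
  next
    case 5
    have r: "2 \<le> k" "k \<le> 2*m-2" "2*m-2 < Suc k" "Suc k \<le> 3*m-3" using 5 m by linarith+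
    have "2*m-2 = 2*(m-1)" by simp
    hence "(2*m-2) div 2 = m-1" by simp
    hence A: "P m k = {m-1, m}" using P_R2[OF r(1,2)] 5 by simp
    have B: "P m (Suc k) = {0..0} \<union> {m-1, m}" using P_R4[OF r(3,4) m] 5 m by simp
    have G: "g m k = 0" using g_mid[OF m] 5 by simp
    show ?thesis unfolding A B G using m by auto
  next
    case 6
    have r: "2*m-2 < k" "k \<le> 3*m-3" "2*m-2 < Suc k" "Suc k \<le> 3*m-3" using 6 m by linarith+
    have A: "P m k = {0..k-(2*m-1)} \<union> {m-1, m}" using P_R4[OF r(1,2) m] .
    have B: "P m (Suc k) = {0..Suc k-(2*m-1)} \<union> {m-1, m}" using P_R4[OF r(3,4) m] .
    have G: "g m k = Suc k - (2*m-1)" using g_R4[OF r(1,2) m] 6 m by simp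
    have "Suc k - (2*m-1) = Suc (k - (2*m-1))" "Suc k - (2*m-1) < m - 1" using 6 m by linarith+
    then show ?thesis unfolding A B G by auto
  next
    case 7
    have r: "2*m-2 < k" "k \<le> 3*m-3" "3*m-3 < Suc k" using 7 m by linarith+
    have A: "P m k = {0..m-2} \<union> {m-1, m}" using P_R4[OF r(1,2) m] 7 m by simp
    have B: "P m (Suc k) = {0..<m-1} \<union> {m}" using P_R5[OF r(3) m] 7 m by simp
    have G: "g m k = m-1" using g_R4[OF r(1,2) m] 7 m by simp
    show ?thesis unfolding A B G using m by auto
  next
    case 8
    have r: "3*m-3 < k" "3*m-3 < Suc k" using 8 m by linarith+
    have A: "P m k = {0..<4*m-3-k} \<union> {m}" using P_R5[OF r(1) m] .
    have B: "P m (Suc k) = {0..<4*m-4-k} \<union> {m}" using P_R5[OF r(2) m] by simp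
    have G: "g m k = 4*m-4-k" using g_R5[OF r(1) m] .
    have "4*m-3-k = Suc (4*m-4-k)" "4*m-4-k < m" using 8 m k by linarith+
    then show ?thesis unfolding A B G by auto
  qed
qed


lemma P0: "P m 0 = {}" and P1: "P m 1 = {1}" and P1s: "P m (Suc 0) = {Suc 0}" by (simp_all add: P_def)

lemma P_R2_mem: "2 \<le> k \<Longrightarrow> k \<le> 2*m-2 \<Longrightarrow> x \<in> P m k \<longleftrightarrow> x = m \<or> x = k div 2 \<or> (odd k \<and> x = k div 2 + 1)"
  by (auto simp: P_R2)

lemma Pinj:
  assumes m: "m \<ge> 2" and ij: "i < j" and j: "j \<le> 4*m-3"
  shows "P m i \<noteq> P m j"
proof -
  have neq: "\<And>x A B. x \<in> A \<Longrightarrow> x \<notin> B \<Longrightarrow> A \<noteq> B" by blast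
  consider "j = 1" | "2 \<le> j \<and> j \<le> 2*m-2" | "2*m-2 < j \<and> j \<le> 3*m-3" | "3*m-3 < j" using ij by linarith
  then show ?thesis
  proof cases
    case 1
    then have "i = 0" using ij by simp
    then show ?thesis using 1 P0[of m] P1[of m] by simp
  next
    case 2
    have PJ: "\<And>x. x \<in> P m j \<longleftrightarrow> x = m \<or> x = j div 2 \<or> (odd j \<and> x = j div 2 + 1)"
      using 2 P_R2_mem by blast
    consider "i = 0" | "i = 1" | "2 \<le> i" by linarith
    then show ?thesis
    proof cases
      case 1 then show ?thesis using neq[of m "P m j" "P m i"] PJ by (auto simp: P0)
    next
      case 2 then show ?thesis using neq[of m "P m j" "P m i"] PJ m by (auto simp: P1 P1s)
    next
      case 3
      have PI: "\<And>x. x \<in> P m i \<longleftrightarrow> x = m \<or> x = i div 2 \<or> (odd i \<and> x = i div 2 + 1)"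
        using 3 \<open>2 \<le> j \<and> j \<le> 2*m-2\<close> ij P_R2_mem[of i m] by simp
      show ?thesis
      proof (cases "even j")
        case True
        have "i div 2 < j div 2" using True ij by presburger
        moreover have "i div 2 < m" using ij \<open>2 \<le> j \<and> j \<le> 2*m-2\<close> by linarith
        ultimately show ?thesis using neq[of "i div 2" "P m i" "P m j"] PI PJ True by auto
      next
        case False
        have "j div 2 + 1 < m" using False \<open>2 \<le> j \<and> j \<le> 2*m-2\<close> m by presburger
        moreover have "i div 2 < j div 2 + 1" "odd i \<longrightarrow> i div 2 + 1 < j div 2 + 1"
          using False ij by presburger+
        ultimately show ?thesis using neq[of "j div 2 + 1" "P m j" "P m i"] PI PJ False
          by (cases "even i") auto
      qed
    qed
  next
    case 3
    have PJ: "P m j = {0..j-(2*m-1)} \<union> {m-1, m}" using 3 P_R4 m by blast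
    consider "i \<le> 1" | "2 \<le> i \<and> i \<le> 2*m-2" | "2*m-2 < i" by linarith
    then show ?thesis
    proof cases
      case 1
      have "i = 0 \<or> i = 1" using 1 by linarith
      hence "0 \<notin> P m i" using P0[of m] P1[of m] by auto
      then show ?thesis using neq[of 0 "P m j" "P m i"] PJ by auto
    next
      case 2
      have "0 \<notin> P m i" using 2 P_R2_mem[of i m] by auto
      then show ?thesis using neq[of 0 "P m j" "P m i"] PJ by auto
    next
      case 2: 3
      have PI: "P m i = {0..i-(2*m-1)} \<union> {m-1, m}" using 2 3 ij P_R4 m by simp
      have "i-(2*m-1) < j-(2*m-1)" "j-(2*m-1) < m-1" using 2 3 ij m by linarith+
      hence "j-(2*m-1) \<notin> {0..i-(2*m-1)} \<union> {m-1, m}" by auto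
      moreover have "j-(2*m-1) \<in> {0..j-(2*m-1)} \<union> {m-1, m}" by auto
      ultimately show ?thesis unfolding PI PJ by blast
    qed
  next
    case 4
    have PJ: "P m j = {0..<4*m-3-j} \<union> {m}" using 4 P_R5 m by blast
    consider "i \<le> 1" | "2 \<le> i \<and> i \<le> 2*m-2" | "2*m-2 < i \<and> i \<le> 3*m-3" | "3*m-3 < i" by linarith
    then show ?thesis
    proof cases
      case 1
      have "i = 0 \<or> i = 1" using 1 by linarith
      hence "m \<notin> P m i" using P0[of m] P1[of m] m by auto
      then show ?thesis using neq[of m "P m j" "P m i"] PJ by auto
    next
      case 2
      have PI: "\<And>x. x \<in> P m i \<longleftrightarrow> x = m \<or> x = i div 2 \<or> (odd i \<and> x = i div 2 + 1)"
        using 2 P_R2_mem by blast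
      show ?thesis
      proof (cases "4*m-3-j = 0")
        case True
        have "i div 2 \<noteq> m" "i div 2 \<noteq> 0" using 2 by linarith+
        then show ?thesis using neq[of "i div 2" "P m i" "P m j"] PI PJ True by auto
      next
        case False
        have "i div 2 \<noteq> 0" using 2 by linarith
        then show ?thesis using neq[of 0 "P m j" "P m i"] PI PJ False m by auto
      qed
    next
      case 3
      have PI: "P m i = {0..i-(2*m-1)} \<union> {m-1, m}" using 3 P_R4 m by blast
      have "4*m-3-j \<le> m-1" using 4 by linarith
      then show ?thesis using neq[of "m-1" "P m i" "P m j"] PI PJ m by auto
    next
      case 2: 4
      have PI: "P m i = {0..<4*m-3-i} \<union> {m}" using 2 P_R5 m by blast
      have "4*m-4-i < 4*m-3-i" "4*m-3-j \<le> 4*m-4-i" "4*m-4-i < m" using 2 4 ij j by linarith+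
      then show ?thesis using neq[of "4*m-4-i" "P m i" "P m j"] PI PJ by auto
    qed
  qed
qed


lemma Pset_step:
  assumes "k < length w"
  shows "c \<in> Pset w (Suc k) \<longleftrightarrow> ((c \<in> Pset w k) \<noteq> (c = w ! k))"
proof -
  have "take (Suc k) w = take k w @ [w ! k]" using assms by (simp add: take_Suc_conv_app_nth)
  hence "count_list (take (Suc k) w) c = count_list (take k w) c + (if c = w ! k then 1 else 0)"
    by (auto simp: count_list_append_cnt)
  thus ?thesis unfolding Pset_def by auto
qed

lemma PX: "m \<ge> 2 \<Longrightarrow> k \<le> 4*m-3 \<Longrightarrow> Pset (Xw m) k = P m k"
proof (induction k)
  case 0
  then show ?case by (simp add: Pset_def P_def)
next
  case (Suc k)
  hence IH: "Pset (Xw m) k = P m k" by simp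
  have kl: "k < 4*m-3" using Suc.prems by simp
  show ?case
  proof (rule set_eqI)
    fix c
    have "c \<in> Pset (Xw m) (Suc k) \<longleftrightarrow> ((c \<in> Pset (Xw m) k) \<noteq> (c = Xw m ! k))"
      using Pset_step[of k "Xw m" c] kl Suc.prems length_Xw by simp
    also have "\<dots> \<longleftrightarrow> ((c \<in> P m k) \<noteq> (c = g m k))" using IH nth_Xw[OF Suc.prems(1) kl] by simp
    also have "\<dots> \<longleftrightarrow> c \<in> P m (Suc k)" using Pstep[OF Suc.prems(1) kl] by simp
    finally show "c \<in> Pset (Xw m) (Suc k) \<longleftrightarrow> c \<in> P m (Suc k)" .
  qed
qed

lemma odd_factor:
  assumes m: "m \<ge> 2" and ij: "i < j" and j: "j \<le> length (Xw m)"
  shows "\<exists>c. odd (count_list (drop i (take j (Xw m))) c)"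
proof -
  let ?w = "Xw m"
  have jl: "j \<le> 4*m-3" using j length_Xw[OF m] by simp
  have "Pset ?w i \<noteq> Pset ?w j" using PX[OF m] Pinj[OF m ij jl] ij jl by simp
  then obtain c where c: "(c \<in> Pset ?w i) \<noteq> (c \<in> Pset ?w j)" by blast
  have "take j ?w = take i ?w @ drop i (take j ?w)" using ij
    by (metis append_take_drop_id min.strict_order_iff take_take)
  hence "count_list (take j ?w) c = count_list (take i ?w) c + count_list (drop i (take j ?w)) c"
    by (metis count_list_append_cnt)
  thus ?thesis using c unfolding Pset_def by auto
qed

lemma free_of_odd:
  assumes W: "w \<in> words n"
    and H: "\<And>i j. i < j \<Longrightarrow> j \<le> length w \<Longrightarrow> \<exists>c. odd (count_list (drop i (take j w)) c)"
  shows "free_from (S2 n) w"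
  unfolding free_from_def
proof (intro allI impI notI)
  fix u assume su: "sublist u w" and uS: "u \<in> S2 n"
  from uS obtain Y Z where YZ: "u = Y@Z" "Y \<in> words n" "Z \<in> words n" "Y\<noteq>[]" "Z\<noteq>[]"
     "content n Y = content n Z" by (auto simp: S2_def)
  have ms: "mset Y = mset Z" using content_mset YZ by blast
  have ev: "\<And>c. even (count_list u c)"
  proof -
    fix c
    have "count_list Y c = count_list Z c" using ms by (metis count_mset)
    thus "even (count_list u c)" using YZ(1) by (simp add: count_list_append_cnt)
  qed
  from su obtain p s where w: "w = p @ u @ s" by (auto simp: sublist_def)
  define i where "i = length p"
  define j where "j = length p + length u"
  have "u = drop i (take j w)" using w by (simp add: i_def j_def)
  moreover have "i < j" using YZ(1,4) by (simp add: i_def j_def)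
  moreover have "j \<le> length w" using w by (simp add: j_def)
  ultimately show False using H ev by metis
qed


lemma upt_split3: "i \<le> j \<Longrightarrow> j \<le> k \<Longrightarrow> [i..<k] = [i..<j] @ [j..<k]"
  by (metis le_add_diff_inverse upt_add_eq_append)

lemma mset_pairs: "mset (pairs i j) = mset [Suc i..<Suc j] + mset [i..<j]"
  by (induction j) (auto simp: pairs_def)

lemma set_pairs: "x \<in> set (pairs i j) \<Longrightarrow> x \<le> j"
  by (auto simp: pairs_def)

lemma pairs_split: "i \<le> j \<Longrightarrow> j \<le> k \<Longrightarrow> pairs i k = pairs i j @ pairs j k"
  unfolding pairs_def by (simp add: upt_split3[of i j k])

lemma mset_content: "mset X = mset Y \<Longrightarrow> content n X = content n Y"
proof -
  assume h: "mset X = mset Y"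
  have "count_list X = count_list Y" by (rule ext) (metis count_mset h)
  thus ?thesis by (simp add: content_def)
qed

lemma S2I:
  assumes "U \<in> words n" "V \<in> words n" "U \<noteq> []" "V \<noteq> []" "mset U = mset V"
  shows "U @ V \<in> S2 n"
  using assms mset_content unfolding S2_def by blast

lemma words_I: "(\<And>x. x \<in> set w \<Longrightarrow> x \<le> m) \<Longrightarrow> w \<in> words (Suc m)"
  by (auto simp: words_def alphabet_def less_Suc_eq_le)

lemma Xw_words: "m \<ge> 1 \<Longrightarrow> Xw m \<in> words (Suc m)"
  by (rule words_I) (auto simp: Xw_def dest: set_pairs)

lemma Xw_crucial:
  assumes m: "m \<ge> 2"
  shows "crucial (Suc m) (S2 (Suc m)) (Xw m)"
  unfolding crucial_def
proof (intro conjI ballI)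
  have m1: "m \<ge> 1" using m by simp
  show "Xw m \<in> words (Suc m)" by (rule Xw_words[OF m1])
  show "free_from (S2 (Suc m)) (Xw m)"
    by (rule free_of_odd[OF Xw_words[OF m1]]) (rule odd_factor[OF m])
next
  fix a assume "a \<in> alphabet (Suc m)"
  hence a: "a \<le> m" by (simp add: alphabet_def)
  consider "a = 0" | "1 \<le> a \<and> a \<le> m - 1" | "a = m" using a by linarith
  then show "\<exists>u. sublist u (Xw m @ [a]) \<and> u \<in> S2 (Suc m)"
  proof cases
    case 1
    have "[0..<m-1] = [0] @ [1..<m-1]" using m by (metis upt_conv_Cons upt_rec zero_less_diff One_nat_def
        Suc_1 Suc_le_lessD diff_Suc_1 less_diff_conv plus_1_eq_Suc append_Cons append_Nil)
    hence "Xw m @ [a] = ([1, m] @ pairs 1 (m-1) @ [0] @ [1..<m] @ rev [1..<m-1]) @ [0] @ [0]"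
      using 1 by (simp add: Xw_def)
    hence "sublist ([0] @ [0]) (Xw m @ [a])" by (metis sublist_append_leftI)
    moreover have "[0] @ [0] \<in> S2 (Suc m)" by (rule S2I) (auto simp: words_def alphabet_def)
    ultimately show ?thesis by blast
  next
    case 2
    define U where "U = pairs a (m-1) @ [0] @ [1..<Suc a]"
    define V where "V = [Suc a..<m] @ rev [0..<m-1] @ [a]"
    have ps: "pairs 1 (m-1) = pairs 1 a @ pairs a (m-1)" using 2 by (simp add: pairs_split)
    have us: "[1..<m] = [1..<Suc a] @ [Suc a..<m]" using 2 by (intro upt_split3) auto
    have "Xw m @ [a] = ([1, m] @ pairs 1 a) @ U @ V"
      unfolding Xw_def U_def V_def ps us by simp
    hence "sublist (U @ V) (Xw m @ [a])" by (metis sublist_append_leftI)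
    moreover have "U @ V \<in> S2 (Suc m)"
    proof (rule S2I)
      show "U \<in> words (Suc m)" unfolding U_def using 2 by (intro words_I) (auto dest: set_pairs)
      show "V \<in> words (Suc m)" unfolding V_def using 2 by (intro words_I) auto
      show "U \<noteq> []" "V \<noteq> []" by (simp_all add: U_def V_def)
      have e0: "[0..<m-1] = [0..<1] @ [1..<m-1]" using 2 by (intro upt_split3) auto
      have e0': "[1..<m-1] = [1..<a] @ [a..<m-1]" using 2 by (intro upt_split3) auto
      have e1: "[0..<m-1] = [0] @ [1..<a] @ [a..<m-1]" using e0 e0' by simp
      have e2: "[1..<Suc a] = [1..<a] @ [a]" using 2 by simp
      have e3: "Suc (m-1) = m" using m by simp
      show "mset U = mset V" unfolding U_def V_def mset_append e1 e2 mset_pairs e3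
        by (simp del: mset_upt upt_Suc add: ac_simps)
    qed
    ultimately show ?thesis by blast
  next
    case 3
    define U where "U = [1, m] @ pairs 1 (m-1) @ [0]"
    define V where "V = [1..<m] @ rev [0..<m-1] @ [m]"
    have "Xw m @ [a] = U @ V" using 3 unfolding Xw_def U_def V_def by simp
    hence "sublist (U @ V) (Xw m @ [a])" by simp
    moreover have "U @ V \<in> S2 (Suc m)"
    proof (rule S2I)
      show "U \<in> words (Suc m)" unfolding U_def using m by (intro words_I) (auto dest: set_pairs)
      show "V \<in> words (Suc m)" unfolding V_def by (intro words_I) auto
      show "U \<noteq> []" "V \<noteq> []" by (simp_all add: U_def V_def)
      have "[1..<m] = [1..<Suc 1] @ [Suc 1..<m]" using m by (intro upt_split3) auto
      hence e1: "[1..<m] = [1] @ [Suc 1..<m]" by simp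
      have e2: "[0..<m-1] = [0] @ [1..<m-1]" using m by (simp add: upt_conv_Cons)
      have e3: "Suc (m-1) = m" using m by simp
      show "mset U = mset V" unfolding U_def V_def mset_append e1 e2 mset_pairs e3
        by (simp del: mset_upt upt_Suc add: ac_simps)
    qed
    ultimately show ?thesis by blast
  qed
qed


theorem theorem2:
  fixes n :: nat
  assumes "n > 2"
  shows "L_min n (S2 n) = 4 * n - 7"
proof -
  define m where "m = n - 1"
  have m: "m \<ge> 2" and nm: "n = Suc m" using assms by (auto simp: m_def)
  have ex: "crucial n (S2 n) (Xw m) \<and> length (Xw m) = 4 * n - 7"
    using Xw_crucial[OF m] length_Xw[OF m] nm by simp
  show ?thesis unfolding L_min_def
  proof (rule Least_equality)
    show "\<exists>w. crucial n (S2 n) w \<and> length w = 4 * n - 7" using ex by blast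
  next
    fix k assume "\<exists>w. crucial n (S2 n) w \<and> length w = k"
    then obtain w where "crucial n (S2 n) w" "length w = k" by blast
    thus "4 * n - 7 \<le> k" using lower assms by fastforce
  qed
qed

end
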